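(* Let $M$ be a matroid of rank $r$ on a finite linearly ordered set $E$. Then $\mathcal A(M)$ is an antichain, and $\mathcal A(U)\cap\mathcal A(U')=\emptyset$ for all distinct $U,U'\in\mathcal U^*(M)$.
   Context: Graded lexicographic order on $2^E$: $X\prec Y$ if $|X|<|Y|$, or $|X|=|Y|$ and $\min(X\triangle Y)\in X$; $\min\mathcal X$ is the $\prec$-smallest member of a nonempty $\mathcal X$. $X$ is $k$-closed in $M$ if $\mathrm{cl}_M(Y)\subseteq X$ for all $Y\subseteq X$ with $|Y|\le k$; $\mathrm{cl}_k(X)$ is the intersection of all $k$-closed supersets of $X$ (so $\mathrm{cl}_{-1}(X)=X$). For a flat $F$ of rank $k$, $U^*_F=\min\{U:\mathrm{cl}_{k-1}(U)=F\}$; $\mathcal U^*_k=\{U^*_F: F\text{ a flat of rank }k,\ |U^*_F|>k\}$ for $0\le k\le r-1$, and $\mathcal U^*(M)=\bigcup_{k=0}^{r-1}\mathcal U^*_k$. For $U\in\mathcal U^*_k$ define $\mathcal A(U)=\binom{U}{r-1}$ if $k=r-1$; $\mathcal A(U)=\binom{U}{k}\setminus\{\min\binom{U}{k}\}$ if $0<k<r-1$; $\mathcal A(U)=\binom{U}{1}$ if $k=0$. Here $\binom{U}{j}$ is the set of $j$-subsets of $U$. Finally $\mathcal A(M)=\bigcup_{k=0}^{r-1}\bigcup_{U\in\mathcal U^*_k}\mathcal A(U)$. *)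

theory Defs
  imports Main
begin

definition matroid :: "'a set \<Rightarrow> ('a set \<Rightarrow> bool) \<Rightarrow> bool" where
  "matroid E indep \<longleftrightarrow>
     finite E \<and> indep {} \<and>
     (\<forall>X. indep X \<longrightarrow> X \<subseteq> E) \<and>
     (\<forall>X Y. indep Y \<and> X \<subseteq> Y \<longrightarrow> indep X) \<and>
     (\<forall>X Y. indep X \<and> indep Y \<and> card X < card Y \<longrightarrow> (\<exists>y\<in>Y - X. indep (insert y X)))"

definition mrank :: "('a set \<Rightarrow> bool) \<Rightarrow> 'a set \<Rightarrow> nat" where
  "mrank indep X = Max {card I | I. I \<subseteq> X \<and> indep I}"

definition mcl :: "'a set \<Rightarrow> ('a set \<Rightarrow> bool) \<Rightarrow> 'a set \<Rightarrow> 'a set" where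
  "mcl E indep X = {x \<in> E. mrank indep (insert x X) = mrank indep X}"

definition mflat :: "'a set \<Rightarrow> ('a set \<Rightarrow> bool) \<Rightarrow> 'a set \<Rightarrow> bool" where
  "mflat E indep F \<longleftrightarrow> F \<subseteq> E \<and> mcl E indep F = F"

text \<open>X is k-closed (k an integer, possibly -1).\<close>
definition kclosed :: "'a set \<Rightarrow> ('a set \<Rightarrow> bool) \<Rightarrow> int \<Rightarrow> 'a set \<Rightarrow> bool" where
  "kclosed E indep k X \<longleftrightarrow> X \<subseteq> E \<and> (\<forall>Y. Y \<subseteq> X \<and> int (card Y) \<le> k \<longrightarrow> mcl E indep Y \<subseteq> X)"

definition clk :: "'a set \<Rightarrow> ('a set \<Rightarrow> bool) \<Rightarrow> int \<Rightarrow> 'a set \<Rightarrow> 'a set" where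
  "clk E indep k X = \<Inter> {Z. kclosed E indep k Z \<and> X \<subseteq> Z}"

definition glex_less :: "'a::linorder set \<Rightarrow> 'a set \<Rightarrow> bool" where
  "glex_less X Y \<longleftrightarrow> card X < card Y \<or>
     (card X = card Y \<and> X \<noteq> Y \<and> Min ((X - Y) \<union> (Y - X)) \<in> X)"

definition glex_min :: "'a::linorder set set \<Rightarrow> 'a set" where
  "glex_min \<X> = (THE X. X \<in> \<X> \<and> (\<forall>Y\<in>\<X>. Y \<noteq> X \<longrightarrow> glex_less X Y))"

definition UstarF :: "'a::linorder set \<Rightarrow> ('a set \<Rightarrow> bool) \<Rightarrow> 'a set \<Rightarrow> 'a set" where
  "UstarF E indep F =
     glex_min {U. U \<subseteq> E \<and> clk E indep (int (mrank indep F) - 1) U = F}"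

text \<open>\<open>\<U>*_k\<close> (meaningful for k \<le> r - 1).\<close>
definition Ustar :: "'a::linorder set \<Rightarrow> ('a set \<Rightarrow> bool) \<Rightarrow> nat \<Rightarrow> 'a set set" where
  "Ustar E indep k = {UstarF E indep F | F.
     mflat E indep F \<and> mrank indep F = k \<and> card (UstarF E indep F) > k}"

definition binom :: "'a set \<Rightarrow> nat \<Rightarrow> 'a set set" where
  "binom U j = {S. S \<subseteq> U \<and> card S = j}"

definition Acal :: "nat \<Rightarrow> nat \<Rightarrow> 'a::linorder set \<Rightarrow> 'a set set" where
  "Acal r k U =
     (if k = r - 1 then binom U (r - 1)
      else if 0 < k \<and> k < r - 1 then binom U k - {glex_min (binom U k)}
      else binom U 1)"

definition AcalM :: "'a::linorder set \<Rightarrow> ('a set \<Rightarrow> bool) \<Rightarrow> 'a set set" where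
  "AcalM E indep = (\<Union>k\<in>{..<mrank indep E}. \<Union>U\<in>Ustar E indep k. Acal (mrank indep E) k U)"

definition antichain_sets :: "'a set set \<Rightarrow> bool" where
  "antichain_sets \<A> \<longleftrightarrow> (\<forall>X\<in>\<A>. \<forall>Y\<in>\<A>. X \<subseteq> Y \<longrightarrow> X = Y)"

end

theory Submission
  imports Defs
begin


lemma glex_char:
  fixes X Y :: "'a::linorder set"
  assumes "finite X" "finite Y" "card X = card Y"
  shows "glex_less X Y \<longleftrightarrow> (\<exists>m. m \<in> X \<and> m \<notin> Y \<and> (\<forall>x<m. x \<in> X \<longleftrightarrow> x \<in> Y))"
proof
  assume "glex_less X Y"
  then have ne: "X \<noteq> Y" and mi: "Min ((X - Y) \<union> (Y - X)) \<in> X" using assms(3) by (auto simp: glex_less_def)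
  define m where "m = Min ((X - Y) \<union> (Y - X))"
  have fin: "finite ((X - Y) \<union> (Y - X))" using assms by auto
  have nE: "(X - Y) \<union> (Y - X) \<noteq> {}" using ne by auto
  have m_in: "m \<in> (X - Y) \<union> (Y - X)" unfolding m_def using Min_in[OF fin nE] .
  have "\<forall>x<m. x \<in> X \<longleftrightarrow> x \<in> Y"
  proof (intro allI impI)
    fix x assume "x < m"
    show "x \<in> X \<longleftrightarrow> x \<in> Y"
    proof (rule ccontr)
      assume "\<not> (x \<in> X \<longleftrightarrow> x \<in> Y)"
      then have "x \<in> (X - Y) \<union> (Y - X)" by auto
      then have "m \<le> x" unfolding m_def using Min_le[OF fin] by blast
      with \<open>x < m\<close> show False by simp
    qed
  qed
  then show "\<exists>m. m \<in> X \<and> m \<notin> Y \<and> (\<forall>x<m. x \<in> X \<longleftrightarrow> x \<in> Y)"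
    using m_in mi m_def by blast
next
  assume "\<exists>m. m \<in> X \<and> m \<notin> Y \<and> (\<forall>x<m. x \<in> X \<longleftrightarrow> x \<in> Y)"
  then obtain m where m: "m \<in> X" "m \<notin> Y" "\<forall>x<m. x \<in> X \<longleftrightarrow> x \<in> Y" by blast
  have fin: "finite ((X - Y) \<union> (Y - X))" using assms by auto
  have "Min ((X - Y) \<union> (Y - X)) = m"
  proof (rule Min_eqI[OF fin])
    fix y assume y: "y \<in> (X - Y) \<union> (Y - X)"
    show "m \<le> y"
    proof (rule ccontr)
      assume "\<not> m \<le> y"
      then have "y < m" by simp
      then show False using m(3) y by auto
    qed
  next
    show "m \<in> (X - Y) \<union> (Y - X)" using m by auto
  qed
  then show "glex_less X Y" using m assms(3) unfolding glex_less_def by auto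
qed

lemma glex_card: "card X < card Y \<Longrightarrow> glex_less X Y" by (simp add: glex_less_def)

lemma glex_asym:
  fixes X Y :: "'a::linorder set"
  assumes "finite X" "finite Y" "glex_less X Y" shows "\<not> glex_less Y X"
proof
  assume YX: "glex_less Y X"
  have c: "card X = card Y" using assms(3) YX unfolding glex_less_def by auto
  obtain m where m: "m \<in> X" "m \<notin> Y" "\<forall>x<m. x \<in> X \<longleftrightarrow> x \<in> Y"
    using glex_char[OF assms(1,2) c] assms(3) by blast
  obtain n where n: "n \<in> Y" "n \<notin> X" "\<forall>x<n. x \<in> Y \<longleftrightarrow> x \<in> X"
    using glex_char[OF assms(2,1) c[symmetric]] YX by blast
  show False
  proof (cases m n rule: linorder_cases)
    case less then show False using n m by auto
  next
    case equal then show False using m n by auto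
  next
    case greater then show False using m n by auto
  qed
qed

lemma glex_trans:
  fixes X Y Z :: "'a::linorder set"
  assumes "finite X" "finite Y" "finite Z" "glex_less X Y" "glex_less Y Z"
  shows "glex_less X Z"
proof (cases "card X = card Y \<and> card Y = card Z")
  case False
  then have "card X < card Z" using assms(4,5) unfolding glex_less_def by auto
  then show ?thesis by (rule glex_card)
next
  case True
  obtain a where a: "a \<in> X" "a \<notin> Y" "\<forall>x<a. x \<in> X \<longleftrightarrow> x \<in> Y"
    using glex_char[OF assms(1,2)] True assms(4) by blast
  obtain b where b: "b \<in> Y" "b \<notin> Z" "\<forall>x<b. x \<in> Y \<longleftrightarrow> x \<in> Z"
    using glex_char[OF assms(2,3)] True assms(5) by blast
  have c: "card X = card Z" using True by simp
  show ?thesis unfolding glex_char[OF assms(1,3) c]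
  proof (cases a b rule: linorder_cases)
    case less
    have "\<forall>x<a. x \<in> X \<longleftrightarrow> x \<in> Z" using a b less by (meson less_trans)
    then show "\<exists>m. m \<in> X \<and> m \<notin> Z \<and> (\<forall>x<m. x \<in> X \<longleftrightarrow> x \<in> Z)" using a b less by blast
  next
    case equal then show "\<exists>m. m \<in> X \<and> m \<notin> Z \<and> (\<forall>x<m. x \<in> X \<longleftrightarrow> x \<in> Z)" using a b by auto
  next
    case greater
    have "\<forall>x<b. x \<in> X \<longleftrightarrow> x \<in> Z" using a b greater by (meson less_trans)
    moreover have "b \<in> X" using a b greater by auto
    ultimately show "\<exists>m. m \<in> X \<and> m \<notin> Z \<and> (\<forall>x<m. x \<in> X \<longleftrightarrow> x \<in> Z)" using b by blast
  qed
qed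

lemma glex_total:
  fixes X Y :: "'a::linorder set"
  assumes "finite X" "finite Y" "X \<noteq> Y"
  shows "glex_less X Y \<or> glex_less Y X"
proof (cases "card X = card Y")
  case False then show ?thesis by (auto simp: glex_less_def)
next
  case True
  have fin: "finite ((X - Y) \<union> (Y - X))" using assms by auto
  have nE: "(X - Y) \<union> (Y - X) \<noteq> {}" using assms by auto
  have "Min ((X - Y) \<union> (Y - X)) \<in> (X - Y) \<union> (Y - X)" using Min_in[OF fin nE] .
  then show ?thesis using True assms(3) by (auto simp: glex_less_def Un_commute)
qed

lemma glex_min_ex:
  fixes \<X> :: "'a::linorder set set"
  assumes "finite \<X>" "\<X> \<noteq> {}" "\<forall>X\<in>\<X>. finite X"
  shows "\<exists>M\<in>\<X>. \<forall>Y\<in>\<X>. Y \<noteq> M \<longrightarrow> glex_less M Y"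
  using assms
proof (induction \<X> rule: finite_ne_induct)
  case (singleton x) then show ?case by auto
next
  case (insert x F)
  then obtain M where M: "M \<in> F" "\<forall>Y\<in>F. Y \<noteq> M \<longrightarrow> glex_less M Y" by auto
  have fx: "finite x" and fF: "\<forall>Y\<in>F. finite Y" using insert.prems by auto
  show ?case
  proof (cases "glex_less x M")
    case True
    have "\<forall>Y\<in>insert x F. Y \<noteq> x \<longrightarrow> glex_less x Y"
    proof (intro ballI impI)
      fix Y assume Y: "Y \<in> insert x F" "Y \<noteq> x"
      then have YF: "Y \<in> F" by auto
      show "glex_less x Y"
      proof (cases "Y = M")
        case True then show ?thesis using \<open>glex_less x M\<close> by simp
      next
        case False
        then have "glex_less M Y" using M YF by auto
        then show ?thesis using glex_trans[OF fx _ _ \<open>glex_less x M\<close>] fF M YF by blast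
      qed
    qed
    then show ?thesis by blast
  next
    case False
    have "x \<noteq> M" using M insert.hyps by auto
    then have "glex_less M x" using glex_total[OF fx] fF M False by blast
    then show ?thesis using M by auto
  qed
qed

lemma glex_min_props:
  fixes \<X> :: "'a::linorder set set"
  assumes "finite \<X>" "\<X> \<noteq> {}" "\<forall>X\<in>\<X>. finite X"
  shows "glex_min \<X> \<in> \<X> \<and> (\<forall>Y\<in>\<X>. Y \<noteq> glex_min \<X> \<longrightarrow> glex_less (glex_min \<X>) Y)"
proof -
  let ?P = "\<lambda>X. X \<in> \<X> \<and> (\<forall>Y\<in>\<X>. Y \<noteq> X \<longrightarrow> glex_less X Y)"
  have "\<exists>!X. ?P X"
  proof (rule ex_ex1I)
    show "\<exists>X. ?P X" using glex_min_ex[OF assms] by blast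
  next
    fix X X' assume "?P X" "?P X'"
    note h = this
    show "X = X'"
    proof (rule ccontr)
      assume ne: "X \<noteq> X'"
      then have a: "glex_less X X'" and b: "glex_less X' X" using h by auto
      have "finite X" "finite X'" using h assms(3) by auto
      then show False using glex_asym a b by blast
    qed
  qed
  then have "?P (THE X. ?P X)" by (rule theI')
  then show ?thesis unfolding glex_min_def .
qed




lemma E_kclosed: "kclosed E indep k E" by (auto simp: kclosed_def mcl_def)

lemma clk_sup: "U \<subseteq> clk E indep k U" unfolding clk_def by auto

lemma clk_least: "kclosed E indep k Z \<Longrightarrow> U \<subseteq> Z \<Longrightarrow> clk E indep k U \<subseteq> Z"
  unfolding clk_def by auto

lemma clk_sub_E: "U \<subseteq> E \<Longrightarrow> clk E indep k U \<subseteq> E"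
  using clk_least[OF E_kclosed] by blast

lemma clk_mcl:
  assumes "Y \<subseteq> clk E indep k U" "int (card Y) \<le> k"
  shows "mcl E indep Y \<subseteq> clk E indep k U"
proof
  fix x assume x: "x \<in> mcl E indep Y"
  show "x \<in> clk E indep k U" unfolding clk_def
  proof
    fix Z assume Z: "Z \<in> {Z. kclosed E indep k Z \<and> U \<subseteq> Z}"
    then have "Y \<subseteq> Z" using assms(1) unfolding clk_def by blast
    then show "x \<in> Z" using Z assms(2) x unfolding kclosed_def by blast
  qed
qed

lemma clk_closed: "U \<subseteq> E \<Longrightarrow> kclosed E indep k (clk E indep k U)"
proof -
  assume "U \<subseteq> E"
  then have "clk E indep k U \<subseteq> E" by (rule clk_sub_E)
  moreover have "\<forall>Y. Y \<subseteq> clk E indep k U \<and> int (card Y) \<le> k \<longrightarrow> mcl E indep Y \<subseteq> clk E indep k U"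
    using clk_mcl by blast
  ultimately show ?thesis unfolding kclosed_def by blast
qed

lemma clk_eq:
  assumes "V \<subseteq> E" "W \<subseteq> E" "V \<subseteq> clk E indep k W" "W \<subseteq> clk E indep k V"
  shows "clk E indep k V = clk E indep k W"
  using clk_least[OF clk_closed[OF assms(1)] assms(4)] clk_least[OF clk_closed[OF assms(2)] assms(3)]
  by blast

context
  fixes E :: "'a set" and indep :: "'a set \<Rightarrow> bool"
  assumes M: "matroid E indep"
begin

lemma finE: "finite E" using M by (simp add: matroid_def)
lemma indep_empty: "indep {}" using M by (simp add: matroid_def)
lemma indep_sub: "indep X \<Longrightarrow> X \<subseteq> E" using M by (simp add: matroid_def)
lemma indep_subset: "indep Y \<Longrightarrow> X \<subseteq> Y \<Longrightarrow> indep X" using M unfolding matroid_def by blast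
lemma augment: "indep X \<Longrightarrow> indep Y \<Longrightarrow> card X < card Y \<Longrightarrow> \<exists>y\<in>Y - X. indep (insert y X)"
  using M unfolding matroid_def by blast
lemma indep_finite: "indep X \<Longrightarrow> finite X" using indep_sub finE finite_subset by blast

lemma rset_fin: "finite {card I | I. I \<subseteq> X \<and> indep I}"
proof -
  have "{card I | I. I \<subseteq> X \<and> indep I} \<subseteq> card ` Pow E" using indep_sub by auto
  then show ?thesis using finE finite_subset by blast
qed

lemma rank_ge: "I \<subseteq> X \<Longrightarrow> indep I \<Longrightarrow> card I \<le> mrank indep X"
  unfolding mrank_def by (rule Max_ge[OF rset_fin]) auto

lemma basis_ex: "\<exists>I. I \<subseteq> X \<and> indep I \<and> card I = mrank indep X"
proof -
  have ne: "{card I | I. I \<subseteq> X \<and> indep I} \<noteq> {}" using indep_empty by blast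
  from Max_in[OF rset_fin ne] show ?thesis unfolding mrank_def by auto
qed

lemma rank_mono: "X \<subseteq> Y \<Longrightarrow> mrank indep X \<le> mrank indep Y"
proof -
  assume XY: "X \<subseteq> Y"
  obtain I where I: "I \<subseteq> X" "indep I" "card I = mrank indep X" using basis_ex by blast
  have "I \<subseteq> Y" using I XY by auto
  from rank_ge[OF this I(2)] show ?thesis using I by simp
qed

lemma rank_indep: "indep I \<Longrightarrow> mrank indep I = card I"
proof -
  assume I: "indep I"
  obtain J where J: "J \<subseteq> I" "indep J" "card J = mrank indep I" using basis_ex by blast
  have "card J \<le> card I" using J(1) indep_finite[OF I] by (rule card_mono[rotated])
  moreover have "card I \<le> mrank indep I" using rank_ge[OF _ I] by simp
  ultimately show ?thesis using J by simp
qed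

lemma extend: "indep I \<Longrightarrow> I \<subseteq> X \<Longrightarrow> \<exists>J. I \<subseteq> J \<and> J \<subseteq> X \<and> indep J \<and> card J = mrank indep X"
proof (induction "mrank indep X - card I" arbitrary: I rule: less_induct)
  case less
  have le: "card I \<le> mrank indep X" using rank_ge less.prems by blast
  show ?case
  proof (cases "card I = mrank indep X")
    case True then show ?thesis using less.prems by blast
  next
    case False
    obtain B where B: "B \<subseteq> X" "indep B" "card B = mrank indep X" using basis_ex by blast
    then have "card I < card B" using le False by simp
    then obtain y where y: "y \<in> B - I" "indep (insert y I)" using augment less.prems B by blast
    have fI: "finite I" using indep_finite less.prems by blast
    have "card (insert y I) = Suc (card I)" using y fI by simp
    then have lt: "mrank indep X - card (insert y I) < mrank indep X - card I" using le False by simp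
    have sub: "insert y I \<subseteq> X" using y B less.prems by auto
    from less.hyps[OF lt y(2) sub] obtain J where
      "insert y I \<subseteq> J" "J \<subseteq> X" "indep J" "card J = mrank indep X" by blast
    then show ?thesis by blast
  qed
qed

lemma cl_basis1:
  assumes "I \<subseteq> X" "indep I" "card I = mrank indep X" "x \<notin> I" "\<not> indep (insert x I)"
  shows "mrank indep (insert x X) = mrank indep X"
proof -
  obtain J where J: "J \<subseteq> insert x X" "indep J" "card J = mrank indep (insert x X)"
    using basis_ex by blast
  have "mrank indep X \<le> mrank indep (insert x X)" by (rule rank_mono) auto
  moreover have "\<not> mrank indep X < mrank indep (insert x X)"
  proof
    assume "mrank indep X < mrank indep (insert x X)"
    then have "card I < card J" using assms J by simp
    then obtain y where y: "y \<in> J - I" "indep (insert y I)" using augment assms(2) J(2) by blast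
    show False
    proof (cases "y = x")
      case True then show False using y assms(5) by simp
    next
      case False
      then have "y \<in> X" using y J by auto
      then have "insert y I \<subseteq> X" using assms by auto
      from rank_ge[OF this y(2)] have "card (insert y I) \<le> mrank indep X" .
      moreover have "card (insert y I) = Suc (card I)" using y indep_finite assms by auto
      ultimately show False using assms by simp
    qed
  qed
  ultimately show ?thesis by simp
qed

lemma cl_basis2:
  assumes "I \<subseteq> X" "indep I" "card I = mrank indep X" "x \<notin> I" "indep (insert x I)"
  shows "mrank indep (insert x X) \<noteq> mrank indep X"
proof -
  have "insert x I \<subseteq> insert x X" using assms by auto
  then have "card (insert x I) \<le> mrank indep (insert x X)" using rank_ge assms by blast
  moreover have "card (insert x I) = Suc (card I)" using assms indep_finite by simp
  ultimately show ?thesis using assms by simp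
qed

lemma cl_mono:
  assumes YX: "Y \<subseteq> X" shows "mcl E indep Y \<subseteq> mcl E indep X"
proof
  fix x assume x: "x \<in> mcl E indep Y"
  then have xE: "x \<in> E" and xr: "mrank indep (insert x Y) = mrank indep Y" by (auto simp: mcl_def)
  obtain I where I: "I \<subseteq> Y" "indep I" "card I = mrank indep Y" using basis_ex by blast
  have IX: "I \<subseteq> X" using I YX by auto
  obtain J where J: "I \<subseteq> J" "J \<subseteq> X" "indep J" "card J = mrank indep X"
    using extend[OF I(2) IX] by blast
  show "x \<in> mcl E indep X"
  proof (cases "x \<in> J")
    case True then have "insert x X = X" using J by auto
    then show ?thesis using xE by (simp add: mcl_def)
  next
    case False
    then have "x \<notin> I" using J by auto
    then have "\<not> indep (insert x I)" using cl_basis2[OF I] xr by blast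
    then have "\<not> indep (insert x J)" using indep_subset J(1) by (meson insert_mono)
    then have "mrank indep (insert x X) = mrank indep X" using cl_basis1[OF J(2-4) False] by simp
    then show ?thesis using xE by (simp add: mcl_def)
  qed
qed

lemma flat_kclosed: "mflat E indep F \<Longrightarrow> kclosed E indep k F"
  unfolding kclosed_def mflat_def using cl_mono by blast

lemma span:
  assumes F: "mflat E indep F" and Y: "Y \<subseteq> F" "indep Y" "card Y = mrank indep F"
  shows "mcl E indep Y = F"
proof
  show "mcl E indep Y \<subseteq> F" using cl_mono[OF Y(1)] F by (simp add: mflat_def)
  show "F \<subseteq> mcl E indep Y"
  proof
    fix x assume x: "x \<in> F"
    have "mrank indep (insert x Y) \<le> mrank indep F" using x Y by (intro rank_mono) auto
    moreover have "mrank indep Y \<le> mrank indep (insert x Y)" by (rule rank_mono) auto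
    moreover have "mrank indep Y = card Y" using rank_indep Y by blast
    ultimately have "mrank indep (insert x Y) = mrank indep Y" using Y by simp
    moreover have "x \<in> E" using x F by (auto simp: mflat_def)
    ultimately show "x \<in> mcl E indep Y" by (simp add: mcl_def)
  qed
qed

lemma rank0_empty: "mrank indep F = 0 \<Longrightarrow> Y \<subseteq> F \<Longrightarrow> indep Y \<Longrightarrow> Y = {}"
proof -
  assume a: "mrank indep F = 0" "Y \<subseteq> F" "indep Y"
  have "card Y = 0" using rank_ge[OF a(2,3)] a(1) by simp
  then show "Y = {}" using indep_finite[OF a(3)] by simp
qed

lemma rank0_sub:
  assumes F: "mflat E indep F" "mrank indep F = 0" and G: "mflat E indep G" "mrank indep G = 0"
  shows "G \<subseteq> F"
proof
  fix x assume x: "x \<in> G"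
  obtain I where I: "I \<subseteq> insert x F" "indep I" "card I = mrank indep (insert x F)" using basis_ex by blast
  have "I = {}"
  proof (rule ccontr)
    assume "I \<noteq> {}"
    then obtain z where z: "z \<in> I" by blast
    then have iz: "indep {z}" using I indep_subset by blast
    show False
    proof (cases "z = x")
      case True then show False using rank0_empty[OF G(2) _ iz] x by auto
    next
      case False then show False using rank0_empty[OF F(2) _ iz] z I by auto
    qed
  qed
  then have "mrank indep (insert x F) = mrank indep F" using I F by simp
  moreover have "x \<in> E" using x G by (auto simp: mflat_def)
  ultimately have "x \<in> mcl E indep F" by (simp add: mcl_def)
  then show "x \<in> F" using F by (simp add: mflat_def)
qed

end



context
  fixes E :: "'a::linorder set" and indep :: "'a set \<Rightarrow> bool"
  assumes M: "matroid E indep"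
begin

lemma ustar_props:
  assumes F: "mflat E indep F"
  shows "UstarF E indep F \<subseteq> E"
    "clk E indep (int (mrank indep F) - 1) (UstarF E indep F) = F"
    "\<And>V. V \<subseteq> E \<Longrightarrow> clk E indep (int (mrank indep F) - 1) V = F \<Longrightarrow> \<not> glex_less V (UstarF E indep F)"
proof -
  let ?K = "int (mrank indep F) - 1"
  let ?X = "{U. U \<subseteq> E \<and> clk E indep ?K U = F}"
  have fE: "finite E" using finE[OF M] .
  have fin: "finite ?X" using fE by (rule rev_finite_subset[OF finite_Pow_iff[THEN iffD2]]) auto
  have FE: "F \<subseteq> E" using F by (simp add: mflat_def)
  have "clk E indep ?K F = F"
    using clk_sup[of F E indep ?K] clk_least[OF flat_kclosed[OF M F], of F] by blast
  then have ne: "?X \<noteq> {}" using FE by blast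
  have allfin: "\<forall>X\<in>?X. finite X" using fE finite_subset by blast
  note P = glex_min_props[OF fin ne allfin]
  have U: "UstarF E indep F = glex_min ?X" unfolding UstarF_def ..
  show "UstarF E indep F \<subseteq> E" "clk E indep ?K (UstarF E indep F) = F" using P U by auto
  fix V assume V: "V \<subseteq> E" "clk E indep ?K V = F"
  show "\<not> glex_less V (UstarF E indep F)"
  proof (cases "V = UstarF E indep F")
    case True then show ?thesis by (simp add: glex_less_def)
  next
    case False
    then have "glex_less (UstarF E indep F) V" using P U V by auto
    moreover have "finite V" "finite (UstarF E indep F)" using V P U fE finite_subset by auto
    ultimately show ?thesis using glex_asym by blast
  qed
qed

lemma ustar_subF:
  assumes F: "mflat E indep F"
  shows "UstarF E indep F \<subseteq> F"
  using clk_sup[of "UstarF E indep F" E indep "int (mrank indep F) - 1"] ustar_props(2)[OF F] by simp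

lemma lemA:
  assumes F: "mflat E indep F" and Y: "Y \<subseteq> UstarF E indep F" "card Y \<le> mrank indep F"
  shows "indep Y"
proof (rule ccontr)
  assume nd: "\<not> indep Y"
  let ?K = "int (mrank indep F) - 1"
  define U where "U = UstarF E indep F"
  have UE: "U \<subseteq> E" and cU: "clk E indep ?K U = F"
    and mn: "\<And>V. V \<subseteq> E \<Longrightarrow> clk E indep ?K V = F \<Longrightarrow> \<not> glex_less V U"
    using ustar_props[OF F] unfolding U_def by auto
  have YU: "Y \<subseteq> U" using Y U_def by simp
  have finU: "finite U" using UE finE[OF M] finite_subset by blast
  have finY: "finite Y" using YU finU finite_subset by blast
  obtain I where I: "I \<subseteq> Y" "indep I" "card I = mrank indep Y" using basis_ex[OF M] by blast
  have "I \<noteq> Y" using I nd by auto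
  then obtain y where y: "y \<in> Y" "y \<notin> I" using I by blast
  have IY: "I \<subseteq> Y - {y}" using I y by auto
  have "mrank indep (insert y (Y - {y})) = mrank indep (Y - {y})"
  proof -
    have "insert y (Y - {y}) = Y" using y by auto
    moreover have "mrank indep (Y - {y}) \<le> mrank indep Y" by (rule rank_mono[OF M]) auto
    moreover have "card I \<le> mrank indep (Y - {y})" using rank_ge[OF M IY I(2)] .
    ultimately show ?thesis using I by simp
  qed
  then have ymcl: "y \<in> mcl E indep (Y - {y})" using y YU UE by (auto simp: mcl_def)
  have cY: "card (Y - {y}) = card Y - 1" using y finY by simp
  have "0 < card Y" using y finY card_gt_0_iff by blast
  then have cardle: "int (card (Y - {y})) \<le> ?K" using Y(2) cY by linarith
  have UyE: "U - {y} \<subseteq> E" using UE by auto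
  have "Y - {y} \<subseteq> clk E indep ?K (U - {y})" using clk_sup[of "U - {y}"] YU by blast
  then have "mcl E indep (Y - {y}) \<subseteq> clk E indep ?K (U - {y})" using clk_mcl cardle by blast
  then have "y \<in> clk E indep ?K (U - {y})" using ymcl by blast
  then have "U \<subseteq> clk E indep ?K (U - {y})" using clk_sup[of "U - {y}"] by blast
  moreover have "U - {y} \<subseteq> clk E indep ?K U" using clk_sup[of U] by blast
  ultimately have "clk E indep ?K (U - {y}) = clk E indep ?K U" using clk_eq UE UyE by blast
  then have "clk E indep ?K (U - {y}) = F" using cU by simp
  moreover have "glex_less (U - {y}) U"
    using y YU finU by (intro glex_card card_Diff1_less) auto
  ultimately show False using mn UyE by blast
qed

end



lemma acal_props:
  assumes "k < r" "Y \<in> Acal r k U"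
  shows "Y \<subseteq> U \<and> card Y = (if k = 0 \<and> r \<noteq> 1 then 1 else k) \<and>
         (0 < k \<and> k < r - 1 \<longrightarrow> Y \<noteq> glex_min (binom U k))"
  using assms unfolding Acal_def binom_def by (auto split: if_splits)

context
  fixes E :: "'a::linorder set" and indep :: "'a set \<Rightarrow> bool"
  assumes M: "matroid E indep"
begin

lemma ustar_unpack:
  assumes "U \<in> Ustar E indep k"
  obtains F where "U = UstarF E indep F" "mflat E indep F" "mrank indep F = k"
  using assms unfolding Ustar_def by blast

lemma disj:
  assumes k: "k < mrank indep E" "k' < mrank indep E"
    and U: "U \<in> Ustar E indep k" and U': "U' \<in> Ustar E indep k'" and ne: "U \<noteq> U'"
  shows "Acal (mrank indep E) k U \<inter> Acal (mrank indep E) k' U' = {}"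
proof (rule ccontr)
  let ?r = "mrank indep E"
  assume "Acal ?r k U \<inter> Acal ?r k' U' \<noteq> {}"
  then obtain Y where Y1: "Y \<in> Acal ?r k U" and Y2: "Y \<in> Acal ?r k' U'" by blast
  obtain F where F: "U = UstarF E indep F" "mflat E indep F" "mrank indep F = k"
    using U ustar_unpack by blast
  obtain F' where F': "U' = UstarF E indep F'" "mflat E indep F'" "mrank indep F' = k'"
    using U' ustar_unpack by blast
  note A1 = acal_props[OF k(1) Y1] and A2 = acal_props[OF k(2) Y2]
  have UF: "U \<subseteq> F" using ustar_subF[OF M F(2)] F(1) by simp
  have UF': "U' \<subseteq> F'" using ustar_subF[OF M F'(2)] F'(1) by simp
  show False
  proof (cases "k = 0")
    case k0: True
    show False
    proof (cases "k' = 0")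
      case True
      have "F' \<subseteq> F" using rank0_sub[OF M F(2) _ F'(2)] F(3) F'(3) k0 True by simp
      moreover have "F \<subseteq> F'" using rank0_sub[OF M F'(2) _ F(2)] F(3) F'(3) k0 True by simp
      ultimately show False using F F' ne by simp
    next
      case False
      then have cY: "card Y = k'" using A2 by simp
      then have "indep Y" using lemA[OF M F'(2)] A2 F' by auto
      then have "Y = {}" using rank0_empty[OF M _ _ ] F k0 A1 UF by blast
      moreover have "card Y = 1" using A1 k0 False k by auto
      ultimately show False by simp
    qed
  next
    case kn0: False
    show False
    proof (cases "k' = 0")
      case k0: True
      then have cY: "card Y = k" using A1 kn0 by simp
      then have "indep Y" using lemA[OF M F(2)] A1 F by auto
      then have "Y = {}" using rank0_empty[OF M _ _ ] F' k0 A2 UF' by blast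
      moreover have "card Y = 1" using A2 k0 kn0 k by auto
      ultimately show False by simp
    next
      case False
      then have cY: "card Y = k" "card Y = k'" using A1 A2 kn0 by auto
      then have Yi: "indep Y" using lemA[OF M F(2)] A1 F by auto
      have "mcl E indep Y = F" using span[OF M F(2)] A1 UF Yi cY F(3) by auto
      moreover have "mcl E indep Y = F'" using span[OF M F'(2)] A2 UF' Yi cY F'(3) by auto
      ultimately show False using F F' ne by simp
    qed
  qed
qed

lemma anti:
  assumes k: "k < mrank indep E" "k' < mrank indep E"
    and U: "U \<in> Ustar E indep k" and U': "U' \<in> Ustar E indep k'"
    and Y1: "Y \<in> Acal (mrank indep E) k U" and Y2: "Y' \<in> Acal (mrank indep E) k' U'"
    and sub: "Y \<subseteq> Y'"
  shows "Y = Y'"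
proof (rule ccontr)
  let ?r = "mrank indep E"
  assume neq: "Y \<noteq> Y'"
  obtain F where F: "U = UstarF E indep F" "mflat E indep F" "mrank indep F = k"
    using U ustar_unpack by blast
  obtain F' where F': "U' = UstarF E indep F'" "mflat E indep F'" "mrank indep F' = k'"
    using U' ustar_unpack by blast
  note A1 = acal_props[OF k(1) Y1] and A2 = acal_props[OF k(2) Y2]
  have UF: "U \<subseteq> F" using ustar_subF[OF M F(2)] F(1) by simp
  have UF': "U' \<subseteq> F'" using ustar_subF[OF M F'(2)] F'(1) by simp
  have U'E: "U' \<subseteq> E" using ustar_props(1)[OF M F'(2)] F'(1) by simp
  have UE: "U \<subseteq> E" using ustar_props(1)[OF M F(2)] F(1) by simp
  have finU': "finite U'" using U'E finE[OF M] finite_subset by blast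
  have finU: "finite U" using UE finE[OF M] finite_subset by blast
  have finY': "finite Y'" using A2 finU' finite_subset by blast
  have finY: "finite Y" using A1 finU finite_subset by blast
  have lt: "card Y < card Y'" using psubset_card_mono[OF finY'] sub neq by auto
  show False
  proof (cases "k = 0")
    case k0: True
    have r1: "?r \<noteq> 1"
    proof
      assume "?r = 1"
      then have "k' = 0" using k by simp
      then show False using A1 A2 k0 lt \<open>?r = 1\<close> by simp
    qed
    then have cY: "card Y = 1" using A1 k0 by simp
    have k'0: "k' \<noteq> 0" using A2 r1 cY lt by auto
    then have cY': "card Y' = k'" using A2 by simp
    then have "indep Y'" using lemA[OF M F'(2)] A2 F' by auto
    then have "indep Y" using indep_subset[OF M] sub by blast
    then have "Y = {}" using rank0_empty[OF M _ _ ] F k0 A1 UF by blast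
    then show False using cY by simp
  next
    case kn0: False
    then have cY: "card Y = k" using A1 by simp
    have k'0: "k' \<noteq> 0"
    proof
      assume "k' = 0"
      then have "card Y' \<le> 1" using A2 by simp
      then show False using lt cY kn0 by simp
    qed
    then have cY': "card Y' = k'" using A2 by simp
    have kk': "k < k'" using cY cY' lt by simp
    have Yne: "Y \<noteq> glex_min (binom U k)" using A1 kn0 kk' k by auto
    define K where "K = int k' - 1"
    have cU': "clk E indep K U' = F'"
      and mn': "\<And>V. V \<subseteq> E \<Longrightarrow> clk E indep K V = F' \<Longrightarrow> \<not> glex_less V U'"
      using ustar_props(2,3)[OF M F'(2)] F' K_def by auto
    have YU': "Y \<subseteq> U'" using sub A2 by auto
    have Yind: "indep Y" using lemA[OF M F(2)] A1 F cY by auto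
    have YF: "Y \<subseteq> F" using A1 UF by auto
    have FY: "mcl E indep Y = F" using span[OF M F(2) YF Yind] cY F by simp
    have cK: "int (card Y) \<le> K" using kk' K_def cY by simp
    have cap: "U' \<inter> F \<subseteq> Y"
    proof
      fix e assume e: "e \<in> U' \<inter> F"
      show "e \<in> Y"
      proof (rule ccontr)
        assume eY: "e \<notin> Y"
        have Ue: "U' - {e} \<subseteq> E" using U'E by auto
        have "Y \<subseteq> clk E indep K (U' - {e})" using clk_sup[of "U' - {e}" E indep K] YU' eY by blast
        then have "mcl E indep Y \<subseteq> clk E indep K (U' - {e})" using clk_mcl cK by blast
        then have "e \<in> clk E indep K (U' - {e})" using FY e by blast
        then have h1: "U' \<subseteq> clk E indep K (U' - {e})" using clk_sup[of "U' - {e}" E indep K] by blast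
        have h2: "U' - {e} \<subseteq> clk E indep K U'" using clk_sup[of U' E indep K] by blast
        have "clk E indep K (U' - {e}) = clk E indep K U'" by (rule clk_eq[OF Ue U'E h2 h1])
        then have "clk E indep K (U' - {e}) = F'" using cU' by simp
        moreover have "glex_less (U' - {e}) U'" using e finU' by (intro glex_card card_Diff1_less) auto
        ultimately show False using mn' Ue by blast
      qed
    qed
    define B where "B = binom U k"
    have finB: "finite B" unfolding B_def binom_def
      by (rule rev_finite_subset[of "Pow U"]) (use finU in auto)
    have YB: "Y \<in> B" using A1 cY unfolding B_def binom_def by auto
    have allfin: "\<forall>X\<in>B. finite X" using finU finite_subset unfolding B_def binom_def by blast
    have Bne: "B \<noteq> {}" using YB by blast
    note P = glex_min_props[OF finB Bne allfin]
    define Y2 where "Y2 = glex_min B"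
    have Y2B: "Y2 \<in> B" using P Y2_def by simp
    have Y2lt: "glex_less Y2 Y" using P Y2_def YB Yne B_def by auto
    have Y2U: "Y2 \<subseteq> U" and cY2: "card Y2 = k" using Y2B unfolding B_def binom_def by auto
    have finY2: "finite Y2" using Y2U finU finite_subset by blast
    have Y2ind: "indep Y2" using lemA[OF M F(2)] Y2U cY2 F by auto
    have Y2F: "Y2 \<subseteq> F" using Y2U UF by auto
    have FY2: "mcl E indep Y2 = F" using span[OF M F(2) Y2F Y2ind] cY2 F by simp
    have cK2: "int (card Y2) \<le> K" using kk' K_def cY2 by simp
    define U'' where "U'' = (U' - Y) \<union> Y2"
    have FE: "F \<subseteq> E" using F(2) by (simp add: mflat_def)
    have U''E: "U'' \<subseteq> E" using U'E Y2F FE unfolding U''_def by auto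
    have s1: "U'' \<subseteq> clk E indep K U'"
    proof -
      have a: "U' \<subseteq> clk E indep K U'" by (rule clk_sup)
      then have "Y \<subseteq> clk E indep K U'" using YU' by blast
      then have "mcl E indep Y \<subseteq> clk E indep K U'" using clk_mcl cK by blast
      then show ?thesis using a Y2F FY unfolding U''_def by blast
    qed
    have s2: "U' \<subseteq> clk E indep K U''"
    proof -
      have a: "U'' \<subseteq> clk E indep K U''" by (rule clk_sup)
      then have "Y2 \<subseteq> clk E indep K U''" unfolding U''_def by blast
      then have "mcl E indep Y2 \<subseteq> clk E indep K U''" using clk_mcl cK2 by blast
      then show ?thesis using a YF FY2 unfolding U''_def by blast
    qed
    have cU'': "clk E indep K U'' = F'" using clk_eq[OF U''E U'E s1 s2] cU' by simp
    have disjU: "(U' - Y) \<inter> Y2 = {}" using cap Y2F by blast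
    have finU'': "finite U''" using finU' finY2 unfolding U''_def by simp
    have "card U'' = card (U' - Y) + card Y2"
      unfolding U''_def using finU' finY2 disjU by (intro card_Un_disjoint) auto
    moreover have "card (U' - Y) = card U' - card Y" using card_Diff_subset[OF finY YU'] .
    moreover have "card Y \<le> card U'" using card_mono[OF finU' YU'] .
    ultimately have cardU'': "card U'' = card U'" using cY cY2 by simp
    have "glex_less U'' U'"
    proof -
      have cc: "card Y2 = card Y" using cY cY2 by simp
      obtain m where m: "m \<in> Y2" "m \<notin> Y" "\<forall>x<m. x \<in> Y2 \<longleftrightarrow> x \<in> Y"
        using glex_char[OF finY2 finY cc] Y2lt by blast
      have "m \<in> U''" using m unfolding U''_def by blast
      moreover have "m \<notin> U'" using m Y2F cap by blast
      moreover have "\<forall>x<m. x \<in> U'' \<longleftrightarrow> x \<in> U'" using m(3) YU' unfolding U''_def by blast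
      ultimately show ?thesis using glex_char[OF finU'' finU' cardU''] by blast
    qed
    then show False using mn'[OF U''E cU''] by blast
  qed
qed

end

theorem lemma5p4:
  fixes E :: "'a::linorder set" and indep :: "'a set \<Rightarrow> bool"
  assumes "matroid E indep"
  shows "antichain_sets (AcalM E indep) \<and>
    (\<forall>k k' U U'. k < mrank indep E \<longrightarrow> k' < mrank indep E \<longrightarrow>
        U \<in> Ustar E indep k \<longrightarrow> U' \<in> Ustar E indep k' \<longrightarrow> U \<noteq> U' \<longrightarrow>
        Acal (mrank indep E) k U \<inter> Acal (mrank indep E) k' U' = {})"
proof
  show "antichain_sets (AcalM E indep)"
    unfolding antichain_sets_def AcalM_def
  proof (intro ballI impI)
    fix X Y
    assume X: "X \<in> (\<Union>k\<in>{..<mrank indep E}. \<Union>U\<in>Ustar E indep k. Acal (mrank indep E) k U)"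
      and Y: "Y \<in> (\<Union>k\<in>{..<mrank indep E}. \<Union>U\<in>Ustar E indep k. Acal (mrank indep E) k U)"
      and XY: "X \<subseteq> Y"
    from X obtain k U where "k < mrank indep E" "U \<in> Ustar E indep k" "X \<in> Acal (mrank indep E) k U" by blast
    moreover from Y obtain k' U' where "k' < mrank indep E" "U' \<in> Ustar E indep k'" "Y \<in> Acal (mrank indep E) k' U'" by blast
    ultimately show "X = Y" using anti[OF assms] XY by blast
  qed
  show "\<forall>k k' U U'. k < mrank indep E \<longrightarrow> k' < mrank indep E \<longrightarrow>
        U \<in> Ustar E indep k \<longrightarrow> U' \<in> Ustar E indep k' \<longrightarrow> U \<noteq> U' \<longrightarrow>
        Acal (mrank indep E) k U \<inter> Acal (mrank indep E) k' U' = {}"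
    using disj[OF assms] by blast
qed


end
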